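(* Let $\sigma:\mathbb{R}\to\mathbb{R}$ be continuous and let $F:\mathbb{R}^d\to\mathbb{R}^d$ be given by $F=A_L\circ\dots\circ A_1$ with $A_j(x)=\sigma(W_jx+b_j)$, $W_j\in\mathbb{R}^{d\times d}$, $b_j\in\mathbb{R}^d$, $j=1,\dots,L$. Then for every compact $K\subset\mathbb{R}^d$ and every $\varepsilon>0$ there exist invertible $\tilde W_j\in\mathbb{R}^{d\times d}$, $j=1,\dots,L$, such that the function $\tilde F=\tilde A_L\circ\dots\circ\tilde A_1$ with $\tilde A_j(x)=\sigma(\tilde W_jx+b_j)$ satisfies $\|\tilde F-F\|_K<\varepsilon$.
   Context: $\sigma$ is applied componentwise to vectors. For $f:K\to\mathbb{R}^m$, $\|f\|_K=\sup\{\|f(x)\|:x\in K\}$ with $\|\cdot\|$ the Euclidean norm. *)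

theory Defs
  imports "HOL-Analysis.Analysis"
begin

definition act :: "(real \<Rightarrow> real) \<Rightarrow> real^'n \<Rightarrow> real^'n" where
  "act \<sigma> v = (\<chi> i. \<sigma> (v $ i))"

text \<open>The network A_k o ... o A_1 with A_j(x) = sigma(W_j x + b_j), layers indexed 1..k.\<close>
fun net :: "(real \<Rightarrow> real) \<Rightarrow> (nat \<Rightarrow> real^'n^'n) \<Rightarrow> (nat \<Rightarrow> real^'n) \<Rightarrow> nat \<Rightarrow> real^'n \<Rightarrow> real^'n" where
  "net \<sigma> W b 0 x = x"
| "net \<sigma> W b (Suc k) x = act \<sigma> (W (Suc k) *v net \<sigma> W b k x + b (Suc k))"

end

theory Submission
  imports Defs "HOL-Computational_Algebra.Polynomial"
begin

lemma mat_entry: "(A + t *\<^sub>R mat 1 :: real^'n^'n) $ i $ j = A $ i $ j + (if i = j then t else 0)"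
  by (simp add: mat_def)

lemma smat: "((c *\<^sub>R mat 1) :: real^'n^'n) *v x = c *\<^sub>R x"
  by (metis scaleR_matrix_vector_assoc matrix_vector_mul_lid)

lemma det_poly: fixes A :: "real^'n^'n"
  shows "\<exists>q. \<forall>t. poly q t = det (A + t *\<^sub>R mat 1)"
proof -
  define q where "q = (\<Sum>p\<in>{p. p permutes (UNIV::'n set)}. smult (of_int (sign p)) (\<Prod>i\<in>UNIV. [:A$i$p i, if i = p i then 1 else 0:]))"
  have "poly q t = det (A + t *\<^sub>R mat 1)" for t
    unfolding q_def det_def poly_sum poly_prod by (intro sum.cong refl) (simp add: poly_prod mat_def)
  then show ?thesis by blast
qed

lemma large_inv: fixes A :: "real^'n^'n"
  shows "\<exists>t. invertible (A + t *\<^sub>R mat 1)"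
proof -
  obtain B where B: "B > 0" "\<And>x. norm (A *v x) \<le> norm x * B"
    using bounded_linear.pos_bounded[OF matrix_vector_mul_bounded_linear] by blast
  have "inj ((*v) (A + (B+1) *\<^sub>R mat 1))"
  proof (rule linear_injective_0[THEN iffD2])
    show "linear ((*v) (A + (B+1) *\<^sub>R mat 1))" by (rule matrix_vector_mul_linear)
    show "\<forall>x. (A + (B + 1) *\<^sub>R mat 1) *v x = 0 \<longrightarrow> x = 0"
    proof (intro allI impI)
      fix x assume "(A + (B + 1) *\<^sub>R mat 1) *v x = 0"
      then have "A *v x = - ((B+1) *\<^sub>R x)"
        by (simp add: matrix_vector_mult_add_rdistrib smat eq_neg_iff_add_eq_0)
      then have "(B+1) * norm x \<le> norm x * B" using B(2)[of x] B(1) by simp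
      then have "norm x \<le> 0" by (simp add: algebra_simps)
      then show "x = 0" by simp
    qed
  qed
  then show ?thesis using invertible_left_inverse matrix_left_invertible_injective by blast
qed

lemma small_inv: fixes A :: "real^'n^'n" assumes "e > 0"
  shows "\<exists>t. \<bar>t\<bar> < e \<and> invertible (A + t *\<^sub>R mat 1)"
proof (rule ccontr)
  assume H: "\<not> ?thesis"
  obtain q where q: "\<And>t. poly q t = det (A + t *\<^sub>R mat 1)" using det_poly by blast
  obtain t0 where "invertible (A + t0 *\<^sub>R mat 1)" using large_inv by blast
  then have "q \<noteq> 0" using q[of t0] invertible_det_nz by (metis poly_0)
  then have fin: "finite {x. poly q x = 0}" by (rule poly_roots_finite)
  have "{-e/2<..<e/2} \<subseteq> {x. poly q x = 0}"
  proof
    fix x assume "x \<in> {-e/2<..<e/2}"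
    then have "\<bar>x\<bar> < e" using assms by auto
    then have "\<not> invertible (A + x *\<^sub>R mat 1)" using H by blast
    then show "x \<in> {x. poly q x = 0}" unfolding mem_Collect_eq q using invertible_det_nz by blast
  qed
  moreover have "infinite {-e/2<..<e/2::real}" using assms by simp
  ultimately show False using fin finite_subset by blast
qed
lemma net_cong: "(\<And>j. 1 \<le> j \<Longrightarrow> j \<le> k \<Longrightarrow> W' j = W j) \<Longrightarrow> net \<sigma> W' b k x = net \<sigma> W b k x"
  by (induction k) auto

lemma act_cont: assumes "continuous_on UNIV \<sigma>" shows "continuous_on UNIV (act \<sigma> :: real^'n \<Rightarrow> real^'n)"
  unfolding act_def
  by (intro continuous_on_vec_lambda continuous_on_compose2[OF assms] continuous_on_component continuous_on_id) auto

lemma net_cont: assumes "continuous_on UNIV \<sigma>" shows "continuous_on UNIV (net \<sigma> W b k :: real^'n \<Rightarrow> real^'n)"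
proof (induction k)
  case 0 then show ?case by (simp add: continuous_on_id)
next
  case (Suc k)
  have "continuous_on UNIV (\<lambda>x. W (Suc k) *v net \<sigma> W b k x)"
    by (rule continuous_on_compose2[OF linear_continuous_on[OF matrix_vector_mul_bounded_linear] Suc]) auto
  then have "continuous_on UNIV (\<lambda>x. W (Suc k) *v net \<sigma> W b k x + b (Suc k))"
    by (intro continuous_intros)
  then show ?case
    by (simp add: continuous_on_compose2[OF act_cont[OF assms]])
qed

lemma approx:
  fixes \<sigma> :: "real \<Rightarrow> real" and W :: "nat \<Rightarrow> real^'n^'n" and b :: "nat \<Rightarrow> real^'n"
  assumes cs: "continuous_on UNIV \<sigma>"
  shows "\<forall>K \<epsilon>. compact K \<longrightarrow> \<epsilon> > 0 \<longrightarrow> (\<exists>W'. (\<forall>j\<in>{1..L}. invertible (W' j)) \<and>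
          (\<forall>x\<in>K. norm (net \<sigma> W' b L x - net \<sigma> W b L x) < \<epsilon>))"
proof (induction L)
  case 0
  show ?case
    by (intro allI impI exI[of _ "\<lambda>_. mat 1"]) auto
next
  case (Suc L)
  show ?case
  proof (intro allI impI)
    fix K :: "(real^'n) set" and \<epsilon> :: real
    assume K: "compact K" and ep: "\<epsilon> > 0"
    have "compact (net \<sigma> W b L ` K)"
      by (rule compact_continuous_image[OF continuous_on_subset[OF net_cont[OF cs]] K]) auto
    then obtain R where R: "R > 0" "\<And>y. y \<in> net \<sigma> W b L ` K \<Longrightarrow> norm y \<le> R"
      using compact_imp_bounded bounded_pos by metis
    obtain B where B: "B > 0" "\<And>v. norm (W (Suc L) *v v) \<le> norm v * B"
      using bounded_linear.pos_bounded[OF matrix_vector_mul_bounded_linear] by blast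
    define R2 where "R2 = B*(R+1) + (R+1) + norm (b (Suc L))"
    have "uniformly_continuous_on (cball 0 R2) (act \<sigma> :: real^'n \<Rightarrow> real^'n)"
      by (rule compact_uniformly_continuous[OF continuous_on_subset[OF act_cont[OF cs]] compact_cball]) auto
    note uc = this
    have "\<exists>d>0. \<forall>z\<in>cball (0::real^'n) R2. \<forall>z'\<in>cball 0 R2. dist z' z < d \<longrightarrow> dist (act \<sigma> z') (act \<sigma> z) < \<epsilon>"
      using uc[unfolded uniformly_continuous_on_def, rule_format, OF ep] .
    then obtain d where d0: "d > 0" and dd: "\<forall>z\<in>cball (0::real^'n) R2. \<forall>z'\<in>cball 0 R2. dist z' z < d \<longrightarrow> dist (act \<sigma> z') (act \<sigma> z) < \<epsilon>"
      by blast
    note d = d0 dd[rule_format]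
    define \<eta> where "\<eta> = min 1 (d/(2*B))"
    have eta: "\<eta> > 0" using d B by (simp add: \<eta>_def)
    obtain W0 where W0: "\<forall>j\<in>{1..L}. invertible (W0 j)"
       "\<And>x. x \<in> K \<Longrightarrow> norm (net \<sigma> W0 b L x - net \<sigma> W b L x) < \<eta>"
      using Suc.IH[rule_format, OF K eta] by blast
    have pos: "min 1 (d/(2*(R+1))) > 0" using d R by simp
    obtain t where t: "\<bar>t\<bar> < min 1 (d/(2*(R+1)))" "invertible (W (Suc L) + t *\<^sub>R mat 1)"
      using small_inv[OF pos, of "W (Suc L)"] by blast
    define W' where "W' = W0(Suc L := W (Suc L) + t *\<^sub>R mat 1)"
    have inv: "\<forall>j\<in>{1..Suc L}. invertible (W' j)"
      using W0(1) t(2) by (auto simp: W'_def)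
    have "norm (net \<sigma> W' b (Suc L) x - net \<sigma> W b (Suc L) x) < \<epsilon>" if x: "x \<in> K" for x
    proof -
      define y where "y = net \<sigma> W b L x"
      define y' where "y' = net \<sigma> W0 b L x"
      have yy: "norm (y' - y) < \<eta>" using W0(2)[OF x] by (simp add: y_def y'_def)
      have ny: "norm y \<le> R" using R(2) x by (simp add: y_def)
      have ny': "norm y' \<le> R + 1"
        using yy ny norm_triangle_ineq[of "y' - y" y] by (simp add: \<eta>_def)
      have e1: "net \<sigma> W' b L x = y'" unfolding y'_def by (rule net_cong) (auto simp: W'_def)
      define z where "z = W (Suc L) *v y + b (Suc L)"
      define z' where "z' = W (Suc L) *v y' + t *\<^sub>R y' + b (Suc L)"
      have e2: "net \<sigma> W' b (Suc L) x = act \<sigma> z'"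
        unfolding net.simps e1 by (simp add: z'_def W'_def matrix_vector_mult_add_rdistrib smat add.assoc)
      have e3: "net \<sigma> W b (Suc L) x = act \<sigma> z" by (simp add: z_def y_def)
      have "z' - z = W (Suc L) *v (y' - y) + t *\<^sub>R y'"
        by (simp add: z_def z'_def matrix_vector_mult_diff_distrib algebra_simps)
      then have "norm (z' - z) \<le> norm (y' - y) * B + \<bar>t\<bar> * norm y'"
        using B(2)[of "y' - y"] norm_triangle_ineq[of "W (Suc L) *v (y' - y)" "t *\<^sub>R y'"] by simp
      also have "\<dots> < d/2 + d/2"
      proof (rule add_less_le_mono)
        have "norm (y' - y) * B < \<eta> * B" using yy B by simp
        also have "\<dots> \<le> d/(2*B) * B" using B by (intro mult_right_mono) (auto simp: \<eta>_def)
        finally show "norm (y' - y) * B < d/2" using B by simp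
        have "\<bar>t\<bar> * norm y' \<le> d/(2*(R+1)) * (R+1)"
          using t(1) ny' by (intro mult_mono) auto
        moreover have "d/(2*(R+1)) * (R+1) = d/2" using R by (simp add: field_simps)
        ultimately show "\<bar>t\<bar> * norm y' \<le> d/2" by linarith
      qed
      finally have dz: "dist z' z < d" by (simp add: dist_norm)
      have "norm z \<le> norm (W (Suc L) *v y) + norm (b (Suc L))"
        unfolding z_def by (rule norm_triangle_ineq)
      also have "\<dots> \<le> R * B + norm (b (Suc L))"
        using B(2)[of y] mult_right_mono[OF ny less_imp_le[OF B(1)]] by linarith
      finally have nz: "norm z \<le> R * B + norm (b (Suc L))" .
      have "R * B \<le> B*(R+1) + (R+1)" using B R by (simp add: algebra_simps)
      then have zin: "z \<in> cball 0 R2" unfolding R2_def mem_cball_0 using nz by linarith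
      have "norm z' \<le> norm (W (Suc L) *v y') + norm (t *\<^sub>R y') + norm (b (Suc L))"
        unfolding z'_def using norm_triangle_ineq[of "W (Suc L) *v y' + t *\<^sub>R y'" "b (Suc L)"]
          norm_triangle_ineq[of "W (Suc L) *v y'" "t *\<^sub>R y'"] by linarith
      also have "\<dots> \<le> (R+1) * B + 1 * (R+1) + norm (b (Suc L))"
      proof -
        have "norm (W (Suc L) *v y') \<le> (R+1) * B"
          using B(2)[of y'] mult_right_mono[OF ny' less_imp_le[OF B(1)]] by linarith
        moreover have "norm (t *\<^sub>R y') \<le> 1 * (R+1)"
          using mult_mono[of "\<bar>t\<bar>" 1 "norm y'" "R+1"] t(1) ny' by simp
        ultimately show ?thesis by simp
      qed
      finally have zin': "z' \<in> cball 0 R2" unfolding R2_def mem_cball_0 by (simp add: algebra_simps)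
      show ?thesis using d(2)[OF zin zin' dz] e2 e3 by (simp add: dist_norm)
    qed
    then show "\<exists>W'. (\<forall>j\<in>{1..Suc L}. invertible (W' j)) \<and>
          (\<forall>x\<in>K. norm (net \<sigma> W' b (Suc L) x - net \<sigma> W b (Suc L) x) < \<epsilon>)"
      using inv by blast
  qed
qed

theorem lemma7:
  fixes \<sigma> :: "real \<Rightarrow> real"
    and W :: "nat \<Rightarrow> real^'n^'n" and b :: "nat \<Rightarrow> real^'n"
    and L :: nat and K :: "(real^'n) set" and \<epsilon> :: real
  assumes "continuous_on UNIV \<sigma>"
    and "compact K"
    and "\<epsilon> > 0"
  shows "\<exists>W'. (\<forall>j\<in>{1..L}. invertible (W' j)) \<and>
          (\<exists>e<\<epsilon>. \<forall>x\<in>K. norm (net \<sigma> W' b L x - net \<sigma> W b L x) \<le> e)"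
proof -
  obtain W' where "\<forall>j\<in>{1..L}. invertible (W' j)"
      "\<forall>x\<in>K. norm (net \<sigma> W' b L x - net \<sigma> W b L x) < \<epsilon>/2"
    using approx[OF assms(1), rule_format, OF assms(2) half_gt_zero[OF assms(3)]] by blast
  then show ?thesis using assms(3)
    by (intro exI[of _ W'] conjI exI[of _ "\<epsilon>/2"]) (auto intro: less_imp_le)
qed

end
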